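(* Let $\alpha>0$, $t_0>0$, $x_0,v_0\in\mathcal H$, and let $x:[t_0,+\infty)\to\mathcal H$ be a solution of the Cauchy problem $$\tfrac{\alpha}{t}\dot x(t)+\operatorname{proj}_{C(x(t))+\ddot x(t)}(0)=0\ (t>t_0),\qquad x(t_0)=x_0,\ \dot x(t_0)=v_0 .$$ For $i=1,\dots,m$ define $\mathcal W_i(t)=f_i(x(t))+\frac12\|\dot x(t)\|^2$. Then for all $i$ and almost all $t\in[t_0,+\infty)$, $$\tfrac{d}{dt}\mathcal W_i(t)\le-\tfrac{\alpha}{t}\|\dot x(t)\|^2 .$$ Hence each $\mathcal W_i$ is nonincreasing, and $\mathcal W_i^\infty=\lim_{t\to+\infty}\mathcal W_i(t)$ exists in $\mathbb R\cup\{-\infty\}$. If $f_i$ is bounded from below, then $\mathcal W_i^\infty\in\mathbb R$.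
   Context: $\mathcal H$ is a real Hilbert space. $f_1,\dots,f_m:\mathcal H\to\mathbb R$ are convex and continuously differentiable. $C(x)=\operatorname{co}\{\nabla f_i(x):i=1,\dots,m\}$. For a closed convex $K$, $\operatorname{proj}_K(y)=\arg\min_{w\in K}\|w-y\|^2$. A solution of the Cauchy problem is a function $x:[t_0,+\infty)\to\mathcal H$ such that: $x\in C^1([t_0,+\infty))$; $\dot x$ is absolutely continuous on $[t_0,T]$ for every $T\ge t_0$; there is a Bochner measurable $\ddot x$ with $\dot x(t)=\dot x(t_0)+\int_{t_0}^t\ddot x(s)\,ds$ for all $t$, and $\frac{d}{dt}\dot x=\ddot x$ a.e.; the equation holds for almost all $t\ge t_0$; and the initial conditions hold. *)

theory Defs
  imports "HOL-Analysis.Analysis"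
begin

definition proj :: "'a::real_inner set \<Rightarrow> 'a \<Rightarrow> 'a" where
  "proj K y = (SOME w. w \<in> K \<and> (\<forall>z\<in>K. (norm (w - y))\<^sup>2 \<le> (norm (z - y))\<^sup>2))"

definition abs_cont_on :: "real set \<Rightarrow> (real \<Rightarrow> 'a::real_normed_vector) \<Rightarrow> bool" where
  "abs_cont_on S f \<longleftrightarrow>
     (\<forall>\<epsilon>>0. \<exists>\<delta>>0. \<forall>(n::nat) (a::nat \<Rightarrow> real) b.
        (\<forall>k<n. a k \<le> b k \<and> {a k..b k} \<subseteq> S) \<longrightarrow>
        (\<forall>j<n. \<forall>k<n. j \<noteq> k \<longrightarrow> b j \<le> a k \<or> b k \<le> a j) \<longrightarrow>
        (\<Sum>k<n. b k - a k) < \<delta> \<longrightarrow>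
        (\<Sum>k<n. norm (f (b k) - f (a k))) < \<epsilon>)"

definition Cset :: "nat \<Rightarrow> (nat \<Rightarrow> 'a \<Rightarrow> 'a::real_inner) \<Rightarrow> 'a \<Rightarrow> 'a set" where
  "Cset m g z = convex hull {g i z | i. i \<in> {1..m}}"

end

theory Submission
  imports Defs
begin


lemma proj_var:
  fixes K :: "'a::real_inner set"
  assumes "compact K" "convex K" "K \<noteq> {}"
  shows "proj K 0 \<in> K \<and> (\<forall>z\<in>K. proj K 0 \<bullet> proj K 0 \<le> proj K 0 \<bullet> z)"
proof -
  obtain w where w: "w \<in> K" "\<forall>y\<in>K. (norm (w - 0))\<^sup>2 \<le> (norm (y - 0))\<^sup>2"
    using continuous_attains_inf[OF assms(1) assms(3), of "\<lambda>w. (norm (w - 0))\<^sup>2"]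
    by (auto intro!: continuous_intros)
  define p where "p = proj K 0"
  have p: "p \<in> K" "\<forall>z\<in>K. (norm (p - 0))\<^sup>2 \<le> (norm (z - 0))\<^sup>2"
    unfolding p_def proj_def using someI[of "\<lambda>w. w \<in> K \<and> (\<forall>z\<in>K. (norm (w - 0))\<^sup>2 \<le> (norm (z - 0))\<^sup>2)", OF conjI[OF w]]
    by auto
  have "p \<bullet> (z - p) \<ge> 0" if z: "z \<in> K" for z
  proof (rule ccontr)
    assume neg: "\<not> p \<bullet> (z - p) \<ge> 0"
    define d where "d = p \<bullet> (z - p)"
    define q where "q = (z - p) \<bullet> (z - p)"
    have "d < 0" using neg d_def by auto
    have "q > 0"
    proof -
      have "z \<noteq> p" using neg by auto
      then show ?thesis unfolding q_def by simp
    qed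
    define s where "s = min 1 (- d / q)"
    have s: "0 < s" "s \<le> 1" "s * q \<le> - d"
      using \<open>d < 0\<close> \<open>q > 0\<close> by (auto simp: s_def min_def field_simps)
    have mem: "p + s *\<^sub>R (z - p) \<in> K"
    proof -
      have "(1 - s) *\<^sub>R p + s *\<^sub>R z \<in> K"
        using assms(2) p(1) z s by (intro convexD) auto
      moreover have "(1 - s) *\<^sub>R p + s *\<^sub>R z = p + s *\<^sub>R (z - p)"
        by (simp add: algebra_simps)
      ultimately show ?thesis by simp
    qed
    have "(norm p)\<^sup>2 \<le> (norm (p + s *\<^sub>R (z - p)))\<^sup>2"
      using p(2) mem by auto
    also have "\<dots> = p \<bullet> p + 2 * s * d + s * (s * q)"
      unfolding power2_norm_eq_inner d_def q_def
      by (simp add: algebra_simps inner_commute)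
    finally have "0 \<le> 2 * s * d + s * (s * q)"
      by (simp add: power2_norm_eq_inner)
    moreover have "s * (s * q) \<le> s * (- d)"
      using s by (intro mult_left_mono) auto
    ultimately have "0 \<le> s * d" by linarith
    then show False using s \<open>d < 0\<close> mult_pos_neg[of s d] by linarith
  qed
  then show ?thesis using p(1) unfolding p_def[symmetric]
    by (auto simp: inner_diff_right)
qed

lemma pointwise:
  fixes f :: "nat \<Rightarrow> 'a::real_inner \<Rightarrow> real" and g :: "nat \<Rightarrow> 'a \<Rightarrow> 'a"
    and x xd xdd :: "real \<Rightarrow> 'a"
  assumes i: "i \<in> {1..m}"
    and fg: "\<And>z. (f i has_derivative (\<lambda>h. g i z \<bullet> h)) (at z)"
    and dx: "(x has_vector_derivative xd t) (at t)"
    and dxd: "(xd has_vector_derivative xdd t) (at t)"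
    and pos: "\<alpha> > 0" "t > 0"
    and ode: "(\<alpha> / t) *\<^sub>R xd t + proj ((\<lambda>c. c + xdd t) ` Cset m g (x t)) 0 = 0"
  shows "\<exists>D. ((\<lambda>t. f i (x t) + (1/2) * (norm (xd t))\<^sup>2) has_real_derivative D) (at t)
            \<and> D \<le> - (\<alpha> / t) * (norm (xd t))\<^sup>2"
proof -
  let ?K = "(\<lambda>c. c + xdd t) ` Cset m g (x t)"
  have eqK: "?K = (+) (xdd t) ` Cset m g (x t)" by (auto simp: add.commute)
  have fin: "finite {g i (x t) | i. i \<in> {1..m}}" by simp
  have gin: "g i (x t) \<in> Cset m g (x t)"
    unfolding Cset_def using i by (intro hull_inc) auto
  have cK: "compact ?K" unfolding eqK unfolding Cset_def
    by (intro compact_translation finite_imp_compact_convex_hull fin)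
  have vK: "convex ?K" unfolding eqK unfolding Cset_def
    by (intro convex_translation convex_convex_hull)
  have zK: "g i (x t) + xdd t \<in> ?K" using gin by auto
  then have neK: "?K \<noteq> {}" by auto
  have pe: "proj ?K 0 = - (\<alpha> / t) *\<^sub>R xd t" using ode by (simp add: eq_neg_iff_add_eq_0 add.commute)
  from proj_var[OF cK vK neK] zK
  have "proj ?K 0 \<bullet> proj ?K 0 \<le> proj ?K 0 \<bullet> (g i (x t) + xdd t)" by blast
  then have ineq0: "(\<alpha> / t) * ((\<alpha> / t) * (xd t \<bullet> xd t)) \<le> - (\<alpha> / t) * (xd t \<bullet> (g i (x t) + xdd t))"
    unfolding pe by (simp add: algebra_simps)
  have apos: "\<alpha> / t > 0" using pos by simp
  have ineq: "g i (x t) \<bullet> xd t + xd t \<bullet> xdd t \<le> - (\<alpha> / t) * (norm (xd t))\<^sup>2"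
  proof -
    from ineq0 have "(\<alpha> / t) * ((\<alpha> / t) * (xd t \<bullet> xd t) + (xd t \<bullet> (g i (x t) + xdd t))) \<le> 0"
      by (simp add: algebra_simps)
    then have "(\<alpha> / t) * (xd t \<bullet> xd t) + (xd t \<bullet> (g i (x t) + xdd t)) \<le> 0"
      using apos by (meson not_le mult_pos_pos)
    then show ?thesis by (simp add: power2_norm_eq_inner inner_add_right inner_commute algebra_simps)
  qed
  have d1: "((\<lambda>t. f i (x t)) has_derivative (\<lambda>h. h * (g i (x t) \<bullet> xd t))) (at t)"
  proof -
    have "((f i \<circ> x) has_derivative ((\<lambda>h. g i (x t) \<bullet> h) \<circ> (\<lambda>h. h *\<^sub>R xd t))) (at t)"
      using dx fg unfolding has_vector_derivative_def by (intro diff_chain_at) auto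
    then show ?thesis by (simp add: o_def mult.commute)
  qed
  have d2: "((\<lambda>t. (1/2) * (norm (xd t))\<^sup>2) has_derivative (\<lambda>h. h * (xd t \<bullet> xdd t))) (at t)"
  proof -
    have "((\<lambda>t. (1/2) * (xd t \<bullet> xd t)) has_derivative
        (\<lambda>h. (1/2) * (xd t \<bullet> (h *\<^sub>R xdd t) + (h *\<^sub>R xdd t) \<bullet> xd t))) (at t)"
      using dxd unfolding has_vector_derivative_def
      by (intro derivative_eq_intros) auto
    then show ?thesis by (simp add: power2_norm_eq_inner inner_commute algebra_simps)
  qed
  have "((\<lambda>t. f i (x t) + (1/2) * (norm (xd t))\<^sup>2) has_real_derivative
          (g i (x t) \<bullet> xd t + xd t \<bullet> xdd t)) (at t)"
    unfolding has_field_derivative_def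
    using has_derivative_add[OF d1 d2]
    by (rule has_derivative_eq_rhs) (auto simp: algebra_simps)
  then show ?thesis using ineq by blast
qed



definition acd :: "(real \<Rightarrow> 'b::real_normed_vector) \<Rightarrow> real \<Rightarrow> real \<Rightarrow> bool" where
  "acd h a b \<longleftrightarrow> (\<forall>\<epsilon>>0. \<exists>\<delta>>0. \<forall>D. D division_of \<Union>D \<longrightarrow> \<Union>D \<subseteq> {a..b} \<longrightarrow>
     (\<Sum>k\<in>D. Sup k - Inf k) < \<delta> \<longrightarrow> (\<Sum>k\<in>D. norm (h (Sup k) - h (Inf k))) < \<epsilon>)"

lemma div_elem:
  fixes D :: "real set set"
  assumes "D division_of S" "k \<in> D"
  shows "\<exists>u v. k = {u..v} \<and> u \<le> v \<and> Inf k = u \<and> Sup k = v"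
proof -
  obtain u v where k: "k = cbox u v" using division_ofD(4)[OF assms] by blast
  have k2: "k = {u..v}" using k by simp
  have "k \<noteq> {}" using division_ofD(3)[OF assms] .
  then have "u \<le> v" using k2 by simp
  then show ?thesis using k2 by simp
qed

lemma div_sum_nonneg:
  fixes D :: "real set set"
  assumes "D division_of S" "k \<in> D"
  shows "Inf k \<le> Sup k"
  using div_elem[OF assms] by auto

lemma acd_lip:
  fixes h :: "real \<Rightarrow> 'b::real_normed_vector"
  assumes lip: "\<And>u v. a \<le> u \<Longrightarrow> u \<le> v \<Longrightarrow> v \<le> b \<Longrightarrow> norm (h v - h u) \<le> B * (v - u)"
  shows "acd h a b"
  unfolding acd_def
proof (intro allI impI)
  fix \<epsilon> :: real assume e: "\<epsilon> > 0"
  define B' where "B' = \<bar>B\<bar> + 1"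
  have B': "B' > 0" "B \<le> B'" unfolding B'_def by auto
  show "\<exists>\<delta>>0. \<forall>D. D division_of \<Union>D \<longrightarrow> \<Union>D \<subseteq> {a..b} \<longrightarrow>
     (\<Sum>k\<in>D. Sup k - Inf k) < \<delta> \<longrightarrow> (\<Sum>k\<in>D. norm (h (Sup k) - h (Inf k))) < \<epsilon>"
  proof (intro exI[of _ "\<epsilon> / B'"] conjI allI impI)
    show "\<epsilon> / B' > 0" using e B' by simp
    fix D :: "real set set"
    assume D: "D division_of \<Union>D" "\<Union>D \<subseteq> {a..b}" "(\<Sum>k\<in>D. Sup k - Inf k) < \<epsilon> / B'"
    have "(\<Sum>k\<in>D. norm (h (Sup k) - h (Inf k))) \<le> (\<Sum>k\<in>D. B' * (Sup k - Inf k))"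
    proof (rule sum_mono)
      fix k assume k: "k \<in> D"
      obtain u v where uv: "k = {u..v}" "u \<le> v" "Inf k = u" "Sup k = v"
        using div_elem[OF D(1) k] by blast
      have "{u..v} \<subseteq> {a..b}" using D(2) k uv(1) by blast
      then have "a \<le> u" "v \<le> b" using uv(2) by auto
      then have "norm (h v - h u) \<le> B * (v - u)" using lip uv by auto
      also have "\<dots> \<le> B' * (v - u)" using B' uv by (intro mult_right_mono) auto
      finally show "norm (h (Sup k) - h (Inf k)) \<le> B' * (Sup k - Inf k)" using uv by simp
    qed
    also have "\<dots> = B' * (\<Sum>k\<in>D. Sup k - Inf k)" by (simp add: sum_distrib_left)
    also have "\<dots> < B' * (\<epsilon> / B')" using D(3) B' by (intro mult_strict_left_mono) auto
    also have "\<dots> = \<epsilon>" using B' by simp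
    finally show "(\<Sum>k\<in>D. norm (h (Sup k) - h (Inf k))) < \<epsilon>" .
  qed
qed

lemma acd_comp:
  fixes h :: "real \<Rightarrow> 'b::real_normed_vector" and q :: "real \<Rightarrow> real"
  assumes ac: "acd h a b"
    and bd: "\<And>u v. a \<le> u \<Longrightarrow> u \<le> v \<Longrightarrow> v \<le> b \<Longrightarrow> \<bar>q v - q u\<bar> \<le> M * norm (h v - h u)"
  shows "acd q a b"
  unfolding acd_def
proof (intro allI impI)
  fix \<epsilon> :: real assume e: "\<epsilon> > 0"
  define M' where "M' = \<bar>M\<bar> + 1"
  have M': "M' > 0" "M \<le> M'" unfolding M'_def by auto
  obtain \<delta> where d: "\<delta> > 0" and dh: "\<And>D. D division_of \<Union>D \<Longrightarrow> \<Union>D \<subseteq> {a..b} \<Longrightarrow>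
     (\<Sum>k\<in>D. Sup k - Inf k) < \<delta> \<Longrightarrow> (\<Sum>k\<in>D. norm (h (Sup k) - h (Inf k))) < \<epsilon> / M'"
    using ac[unfolded acd_def, rule_format, of "\<epsilon> / M'"] e M' by auto
  show "\<exists>\<delta>>0. \<forall>D. D division_of \<Union>D \<longrightarrow> \<Union>D \<subseteq> {a..b} \<longrightarrow>
     (\<Sum>k\<in>D. Sup k - Inf k) < \<delta> \<longrightarrow> (\<Sum>k\<in>D. norm (q (Sup k) - q (Inf k))) < \<epsilon>"
  proof (intro exI[of _ \<delta>] conjI allI impI)
    show "\<delta> > 0" by fact
    fix D :: "real set set"
    assume D: "D division_of \<Union>D" "\<Union>D \<subseteq> {a..b}" "(\<Sum>k\<in>D. Sup k - Inf k) < \<delta>"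
    have "(\<Sum>k\<in>D. norm (q (Sup k) - q (Inf k))) \<le> (\<Sum>k\<in>D. M' * norm (h (Sup k) - h (Inf k)))"
    proof (rule sum_mono)
      fix k assume k: "k \<in> D"
      obtain u v where uv: "k = {u..v}" "u \<le> v" "Inf k = u" "Sup k = v"
        using div_elem[OF D(1) k] by blast
      have "{u..v} \<subseteq> {a..b}" using D(2) k uv(1) by blast
      then have "a \<le> u" "v \<le> b" using uv(2) by auto
      then have "\<bar>q v - q u\<bar> \<le> M * norm (h v - h u)" using bd uv by auto
      also have "\<dots> \<le> M' * norm (h v - h u)" using M' by (intro mult_right_mono) auto
      finally show "norm (q (Sup k) - q (Inf k)) \<le> M' * norm (h (Sup k) - h (Inf k))" using uv by simp
    qed
    also have "\<dots> = M' * (\<Sum>k\<in>D. norm (h (Sup k) - h (Inf k)))" by (simp add: sum_distrib_left)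
    also have "\<dots> < M' * (\<epsilon> / M')" using dh[OF D] M' by (intro mult_strict_left_mono) auto
    also have "\<dots> = \<epsilon>" using M' by simp
    finally show "(\<Sum>k\<in>D. norm (q (Sup k) - q (Inf k))) < \<epsilon>" .
  qed
qed

lemma acd_add:
  fixes h1 h2 :: "real \<Rightarrow> 'b::real_normed_vector"
  assumes "acd h1 a b" "acd h2 a b"
  shows "acd (\<lambda>t. h1 t + h2 t) a b"
  unfolding acd_def
proof (intro allI impI)
  fix \<epsilon> :: real assume e: "\<epsilon> > 0"
  obtain \<delta>1 where d1: "\<delta>1 > 0" and dh1: "\<And>D. D division_of \<Union>D \<Longrightarrow> \<Union>D \<subseteq> {a..b} \<Longrightarrow>
     (\<Sum>k\<in>D. Sup k - Inf k) < \<delta>1 \<Longrightarrow> (\<Sum>k\<in>D. norm (h1 (Sup k) - h1 (Inf k))) < \<epsilon> / 2"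
    using assms(1)[unfolded acd_def, rule_format, of "\<epsilon> / 2"] e by auto
  obtain \<delta>2 where d2: "\<delta>2 > 0" and dh2: "\<And>D. D division_of \<Union>D \<Longrightarrow> \<Union>D \<subseteq> {a..b} \<Longrightarrow>
     (\<Sum>k\<in>D. Sup k - Inf k) < \<delta>2 \<Longrightarrow> (\<Sum>k\<in>D. norm (h2 (Sup k) - h2 (Inf k))) < \<epsilon> / 2"
    using assms(2)[unfolded acd_def, rule_format, of "\<epsilon> / 2"] e by auto
  show "\<exists>\<delta>>0. \<forall>D. D division_of \<Union>D \<longrightarrow> \<Union>D \<subseteq> {a..b} \<longrightarrow>
     (\<Sum>k\<in>D. Sup k - Inf k) < \<delta> \<longrightarrow> (\<Sum>k\<in>D. norm (h1 (Sup k) + h2 (Sup k) - (h1 (Inf k) + h2 (Inf k)))) < \<epsilon>"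
  proof (intro exI[of _ "min \<delta>1 \<delta>2"] conjI allI impI)
    show "min \<delta>1 \<delta>2 > 0" using d1 d2 by simp
    fix D :: "real set set"
    assume D: "D division_of \<Union>D" "\<Union>D \<subseteq> {a..b}" "(\<Sum>k\<in>D. Sup k - Inf k) < min \<delta>1 \<delta>2"
    have "(\<Sum>k\<in>D. norm (h1 (Sup k) + h2 (Sup k) - (h1 (Inf k) + h2 (Inf k))))
        \<le> (\<Sum>k\<in>D. norm (h1 (Sup k) - h1 (Inf k)) + norm (h2 (Sup k) - h2 (Inf k)))"
      by (intro sum_mono) (simp only: add_diff_add norm_triangle_ineq)
    also have "\<dots> = (\<Sum>k\<in>D. norm (h1 (Sup k) - h1 (Inf k))) + (\<Sum>k\<in>D. norm (h2 (Sup k) - h2 (Inf k)))"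
      by (simp add: sum.distrib)
    also have "\<dots> < \<epsilon> / 2 + \<epsilon> / 2" using dh1[OF D(1,2)] dh2[OF D(1,2)] D(3) by (intro add_strict_mono) auto
    finally show "(\<Sum>k\<in>D. norm (h1 (Sup k) + h2 (Sup k) - (h1 (Inf k) + h2 (Inf k)))) < \<epsilon>" by simp
  qed
qed



lemma ac_to_acd:
  fixes h :: "real \<Rightarrow> 'b::real_normed_vector"
  assumes ac: "abs_cont_on S h" and sub: "{a..b} \<subseteq> S"
  shows "acd h a b"
  unfolding acd_def
proof (intro allI impI)
  fix \<epsilon> :: real assume e: "\<epsilon> > 0"
  have "\<exists>\<delta>>0. \<forall>(n::nat) (A::nat \<Rightarrow> real) B.
        (\<forall>k<n. A k \<le> B k \<and> {A k..B k} \<subseteq> S) \<longrightarrow>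
        (\<forall>j<n. \<forall>k<n. j \<noteq> k \<longrightarrow> B j \<le> A k \<or> B k \<le> A j) \<longrightarrow>
        (\<Sum>k<n. B k - A k) < \<delta> \<longrightarrow>
        (\<Sum>k<n. norm (h (B k) - h (A k))) < \<epsilon>"
    using ac e unfolding abs_cont_on_def by blast
  then obtain \<delta> where d: "\<delta> > 0" and dh0: "\<forall>(n::nat) (A::nat \<Rightarrow> real) B.
        (\<forall>k<n. A k \<le> B k \<and> {A k..B k} \<subseteq> S) \<longrightarrow>
        (\<forall>j<n. \<forall>k<n. j \<noteq> k \<longrightarrow> B j \<le> A k \<or> B k \<le> A j) \<longrightarrow>
        (\<Sum>k<n. B k - A k) < \<delta> \<longrightarrow>
        (\<Sum>k<n. norm (h (B k) - h (A k))) < \<epsilon>" by blast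
  show "\<exists>\<delta>>0. \<forall>D. D division_of \<Union>D \<longrightarrow> \<Union>D \<subseteq> {a..b} \<longrightarrow>
     (\<Sum>k\<in>D. Sup k - Inf k) < \<delta> \<longrightarrow> (\<Sum>k\<in>D. norm (h (Sup k) - h (Inf k))) < \<epsilon>"
  proof (intro exI[of _ \<delta>] conjI allI impI)
    show "\<delta> > 0" by fact
    fix D :: "real set set"
    assume D: "D division_of \<Union>D" "\<Union>D \<subseteq> {a..b}" "(\<Sum>k\<in>D. Sup k - Inf k) < \<delta>"
    have finD: "finite D" using division_ofD(1)[OF D(1)] .
    define D' where "D' = {k\<in>D. Inf k < Sup k}"
    have finD': "finite D'" using finD unfolding D'_def by simp
    have D'D: "D' \<subseteq> D" unfolding D'_def by auto
    obtain e where e: "bij_betw e {0..<card D'} D'" using ex_bij_betw_nat_finite[OF finD'] by blast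
    define n where "n = card D'"
    define A where "A j = Inf (e j)" for j
    define B where "B j = Sup (e j)" for j
    have eD': "e j \<in> D'" if "j < n" for j using e that unfolding n_def bij_betw_def by auto
    have ej: "e j = {A j..B j} \<and> A j < B j" if "j < n" for j
    proof -
      have "e j \<in> D" "Inf (e j) < Sup (e j)" using eD'[OF that] unfolding D'_def by auto
      then show ?thesis using div_elem[OF D(1), of "e j"] unfolding A_def B_def by auto
    qed
    have c1: "\<forall>k<n. A k \<le> B k \<and> {A k..B k} \<subseteq> S"
    proof (intro allI impI conjI)
      fix k assume k: "k < n"
      show "A k \<le> B k" using ej[OF k] by simp
      have "e k \<subseteq> \<Union>D" using eD'[OF k] D'D by auto
      then show "{A k..B k} \<subseteq> S" using ej[OF k] D(2) sub by auto
    qed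
    have c2: "\<forall>j<n. \<forall>k<n. j \<noteq> k \<longrightarrow> B j \<le> A k \<or> B k \<le> A j"
    proof (intro allI impI)
      fix j k assume jk: "j < n" "k < n" "j \<noteq> k"
      have "e j \<noteq> e k" using e jk unfolding bij_betw_def inj_on_def n_def by auto
      then have "interior (e j) \<inter> interior (e k) = {}"
        using division_ofD(5)[OF D(1)] eD'[OF jk(1)] eD'[OF jk(2)] D'D by blast
      then have dis: "{A j<..<B j} \<inter> {A k<..<B k} = {}" using ej[OF jk(1)] ej[OF jk(2)] by simp
      show "B j \<le> A k \<or> B k \<le> A j"
      proof (rule ccontr)
        assume "\<not> (B j \<le> A k \<or> B k \<le> A j)"
        then have "max (A j) (A k) < min (B j) (B k)" using ej[OF jk(1)] ej[OF jk(2)] by auto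
        then have "(max (A j) (A k) + min (B j) (B k)) / 2 \<in> {A j<..<B j} \<inter> {A k<..<B k}"
          by auto
        then show False using dis by blast
      qed
    qed
    have s1: "(\<Sum>k<n. B k - A k) = (\<Sum>K\<in>D'. Sup K - Inf K)"
      unfolding A_def B_def n_def using sum.reindex_bij_betw[OF e, of "\<lambda>K. Sup K - Inf K"]
      by (simp add: atLeast0LessThan)
    have s2: "(\<Sum>k<n. norm (h (B k) - h (A k))) = (\<Sum>K\<in>D'. norm (h (Sup K) - h (Inf K)))"
      unfolding A_def B_def n_def using sum.reindex_bij_betw[OF e, of "\<lambda>K. norm (h (Sup K) - h (Inf K))"]
      by (simp add: atLeast0LessThan)
    have zero: "Sup K = Inf K" if "K \<in> D - D'" for K
      using that div_sum_nonneg[OF D(1), of K] unfolding D'_def by auto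
    have s3: "(\<Sum>K\<in>D'. Sup K - Inf K) = (\<Sum>K\<in>D. Sup K - Inf K)"
      using zero by (intro sum.mono_neutral_left finD D'D) auto
    have s4: "(\<Sum>K\<in>D'. norm (h (Sup K) - h (Inf K))) = (\<Sum>K\<in>D. norm (h (Sup K) - h (Inf K)))"
      using zero by (intro sum.mono_neutral_left finD D'D) auto
    have c3: "(\<Sum>k<n. B k - A k) < \<delta>" using s1 s3 D(3) by simp
    have "(\<Sum>k<n. norm (h (B k) - h (A k))) < \<epsilon>"
      using dh0 c1 c2 c3 by blast
    then show "(\<Sum>K\<in>D. norm (h (Sup K) - h (Inf K))) < \<epsilon>" using s2 s4 by simp
  qed
qed



lemma tag_elem:
  assumes p: "p tagged_division_of {a..b::real}" and tk: "(t, K) \<in> p"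
  shows "\<exists>u v. K = {u..v} \<and> u \<le> v \<and> Inf K = u \<and> Sup K = v \<and> t \<in> K \<and> K \<subseteq> {a..b}"
proof -
  have "snd ` p division_of {a..b}" using division_of_tagged_division[OF p] .
  moreover have "K \<in> snd ` p" using tk by force
  ultimately obtain u v where "K = {u..v} \<and> u \<le> v \<and> Inf K = u \<and> Sup K = v"
    using div_elem by blast
  moreover have "t \<in> K" "K \<subseteq> {a..b}" using tagged_division_ofD(2,3)[OF p tk] by auto
  ultimately show ?thesis by blast
qed

lemma test_meas: "u \<le> v \<Longrightarrow> measure lebesgue {u..v::real} = v - u"
  by simp

lemma ae_mono_key:
  fixes f :: "real \<Rightarrow> real"
  assumes ab: "a \<le> b" and N: "negligible N"
    and der: "\<And>t. t \<in> {a..b} - N \<Longrightarrow> \<exists>D. (f has_real_derivative D) (at t within {a..b}) \<and> D \<le> 0"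
    and ac: "acd f a b"
    and e: "\<epsilon> > 0"
  shows "f b - f a \<le> \<epsilon> * (b - a) + \<epsilon>"
proof -
  obtain \<delta> where d: "\<delta> > 0" and dh: "\<And>D. D division_of \<Union>D \<Longrightarrow> \<Union>D \<subseteq> {a..b} \<Longrightarrow>
     (\<Sum>k\<in>D. Sup k - Inf k) < \<delta> \<Longrightarrow> (\<Sum>k\<in>D. norm (f (Sup k) - f (Inf k))) < \<epsilon>"
    using ac[unfolded acd_def, rule_format, of \<epsilon>] e by auto
  have Nl: "N \<in> sets lebesgue" using N negligible_iff_null_sets by (auto simp: null_sets_def)
  obtain U where U: "open U" "N \<subseteq> U" "(U - N) \<in> lmeasurable" "emeasure lebesgue (U - N) < ennreal \<delta>"
    using sets_lebesgue_outer_open[OF Nl d] by blast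
  have Nm: "N \<in> lmeasurable" using N negligible_imp_measurable by blast
  have UU: "U = (U - N) \<union> N" using U(2) by blast
  have Um: "U \<in> lmeasurable" using U(3) Nm by (subst UU) (rule fmeasurable.Un)
  have "measure lebesgue (U - N) < \<delta>"
    using U(4) U(3) d by (simp add: emeasure_eq_measure2 ennreal_less_iff)
  moreover have "measure lebesgue U \<le> measure lebesgue (U - N) + measure lebesgue N"
    using U(3) Nm by (subst UU) (rule measure_Un_le; auto)
  moreover have "measure lebesgue N = 0" using N negligible_imp_measure0 by blast
  ultimately have Umeas: "measure lebesgue U < \<delta>" by linarith
  have "\<forall>t. \<exists>r>0. (t \<in> N \<longrightarrow> ball t r \<subseteq> U) \<and>
      (t \<in> {a..b} - N \<longrightarrow> (\<forall>y\<in>{a..b}. \<bar>y - t\<bar> < r \<longrightarrow>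
          (t \<le> y \<longrightarrow> f y - f t \<le> \<epsilon> * (y - t)) \<and> (y \<le> t \<longrightarrow> f t - f y \<le> \<epsilon> * (t - y))))"
  proof
    fix t
    show "\<exists>r>0. (t \<in> N \<longrightarrow> ball t r \<subseteq> U) \<and>
      (t \<in> {a..b} - N \<longrightarrow> (\<forall>y\<in>{a..b}. \<bar>y - t\<bar> < r \<longrightarrow>
          (t \<le> y \<longrightarrow> f y - f t \<le> \<epsilon> * (y - t)) \<and> (y \<le> t \<longrightarrow> f t - f y \<le> \<epsilon> * (t - y))))"
    proof (cases "t \<in> N")
      case True
      then obtain r where "r > 0" "ball t r \<subseteq> U" using U(1,2) open_contains_ball by blast
      then show ?thesis using True by blast
    next
      case False
      show ?thesis
      proof (cases "t \<in> {a..b}")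
        case False2: False
        then show ?thesis using False by (intro exI[of _ 1]) auto
      next
        case True
        then obtain D where D: "(f has_real_derivative D) (at t within {a..b})" "D \<le> 0"
          using der False by blast
        then obtain r where r: "r > 0" and rr: "\<forall>y\<in>{a..b}. norm (y - t) < r \<longrightarrow>
            norm (f y - f t - D * (y - t)) \<le> \<epsilon> * norm (y - t)"
          using e unfolding has_field_derivative_def has_derivative_within_alt by blast
        have "(\<forall>y\<in>{a..b}. \<bar>y - t\<bar> < r \<longrightarrow>
          (t \<le> y \<longrightarrow> f y - f t \<le> \<epsilon> * (y - t)) \<and> (y \<le> t \<longrightarrow> f t - f y \<le> \<epsilon> * (t - y)))"
        proof (intro ballI impI conjI)
          fix y assume y: "y \<in> {a..b}" "\<bar>y - t\<bar> < r"
          have h: "\<bar>f y - f t - D * (y - t)\<bar> \<le> \<epsilon> * \<bar>y - t\<bar>" using rr y by auto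
          { assume "t \<le> y"
            moreover have "D * (y - t) \<le> 0" using D(2) \<open>t \<le> y\<close> by (simp add: mult_nonpos_nonneg)
            ultimately show "f y - f t \<le> \<epsilon> * (y - t)" using h by auto }
          { assume "y \<le> t"
            moreover have "D * (y - t) \<ge> 0" using D(2) \<open>y \<le> t\<close> by (simp add: mult_nonpos_nonpos)
            ultimately show "f t - f y \<le> \<epsilon> * (t - y)" using h by auto }
        qed
        then show ?thesis using r False by blast
      qed
    qed
  qed
  from choice[OF this] obtain R where R0: "\<forall>t. R t > 0 \<and> (t \<in> N \<longrightarrow> ball t (R t) \<subseteq> U) \<and>
      (t \<in> {a..b} - N \<longrightarrow> (\<forall>y\<in>{a..b}. \<bar>y - t\<bar> < R t \<longrightarrow>
          (t \<le> y \<longrightarrow> f y - f t \<le> \<epsilon> * (y - t)) \<and> (y \<le> t \<longrightarrow> f t - f y \<le> \<epsilon> * (t - y))))"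
    by blast
  have R: "\<And>t. R t > 0"
    "\<And>t. t \<in> N \<Longrightarrow> ball t (R t) \<subseteq> U"
    "\<And>t y. t \<in> {a..b} - N \<Longrightarrow> y \<in> {a..b} \<Longrightarrow> \<bar>y - t\<bar> < R t \<Longrightarrow> t \<le> y \<Longrightarrow> f y - f t \<le> \<epsilon> * (y - t)"
    "\<And>t y. t \<in> {a..b} - N \<Longrightarrow> y \<in> {a..b} \<Longrightarrow> \<bar>y - t\<bar> < R t \<Longrightarrow> y \<le> t \<Longrightarrow> f t - f y \<le> \<epsilon> * (t - y)"
    using R0 by blast+
  have gauge: "gauge (\<lambda>t. ball t (R t))" using R(1) by (intro gauge_ball_dependent) auto
  obtain p where p: "p tagged_division_of {a..b}" "(\<lambda>t. ball t (R t)) fine p"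
    using fine_division_exists_real[OF gauge] by blast
  have finp: "finite p" using p(1) by blast
  define G where "G = (\<lambda>(t::real, K::real set). f (Sup K) - f (Inf K))"
  define P1 where "P1 = {z::real \<times> real set. fst z \<in> N}"
  have sumall: "sum G p = f b - f a" unfolding G_def using additive_tagged_division_1[OF ab p(1)] .
  have split: "sum G p = sum G (p \<inter> P1) + sum G (p - P1)" using finp by (rule sum.Int_Diff)
  have lenall: "(\<Sum>(t,K)\<in>p. Sup K - Inf K) = b - a"
    using additive_tagged_division_1[OF ab p(1), of "\<lambda>x. x"] by simp
  have good: "sum G (p - P1) \<le> \<epsilon> * (b - a)"
  proof -
    have "sum G (p - P1) \<le> (\<Sum>(t,K)\<in>p - P1. \<epsilon> * (Sup K - Inf K))"
    proof (rule sum_mono)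
      fix z assume z: "z \<in> p - P1"
      obtain t K where tK: "z = (t, K)" by fastforce
      have tKp: "(t, K) \<in> p" and tN: "t \<notin> N" using z tK unfolding P1_def by auto
      obtain u v where uv: "K = {u..v}" "u \<le> v" "Inf K = u" "Sup K = v" "t \<in> K" "K \<subseteq> {a..b}"
        using tag_elem[OF p(1) tKp] by blast
      have Kb: "K \<subseteq> ball t (R t)" using p(2) tKp unfolding fine_def by blast
      have ut: "u \<le> t" "t \<le> v" using uv by auto
      have uab: "u \<in> {a..b}" "v \<in> {a..b}" "t \<in> {a..b}" using uv by auto
      have du: "\<bar>u - t\<bar> < R t" "\<bar>v - t\<bar> < R t" using Kb uv(1,2)
        by (auto simp: dist_real_def subset_iff abs_minus_commute)
      have "f v - f t \<le> \<epsilon> * (v - t)" using R(3)[of t v] tN uab du ut by auto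
      moreover have "f t - f u \<le> \<epsilon> * (t - u)" using R(4)[of t u] tN uab du ut by auto
      ultimately have "f v - f u \<le> \<epsilon> * (v - u)" by (simp add: algebra_simps)
      then show "G z \<le> (case z of (t, K) \<Rightarrow> \<epsilon> * (Sup K - Inf K))"
        unfolding G_def tK using uv by simp
    qed
    also have "\<dots> \<le> (\<Sum>(t,K)\<in>p. \<epsilon> * (Sup K - Inf K))"
    proof (rule sum_mono2[OF finp])
      show "p - P1 \<subseteq> p" by blast
      fix z assume "z \<in> p - (p - P1)"
      then have zp: "z \<in> p" by blast
      obtain t K where tK: "z = (t, K)" by fastforce
      obtain u v where uv: "K = {u..v}" "u \<le> v" "Inf K = u" "Sup K = v"
        using tag_elem[OF p(1) zp[unfolded tK]] by blast
      show "0 \<le> (case z of (t, K) \<Rightarrow> \<epsilon> * (Sup K - Inf K))" using tK uv e by simp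
    qed
    also have "\<dots> = \<epsilon> * (\<Sum>(t,K)\<in>p. Sup K - Inf K)"
      by (simp add: sum_distrib_left case_prod_unfold)
    finally show ?thesis using lenall by simp
  qed
  have bad: "sum G (p \<inter> P1) < \<epsilon>"
  proof -
    define p1 where "p1 = p \<inter> P1"
    define D1 where "D1 = snd ` p1"
    have p1p: "p1 \<subseteq> p" unfolding p1_def by blast
    have finp1: "finite p1" using finp p1p finite_subset by blast
    have pp: "p tagged_partial_division_of {a..b}" using p(1) unfolding tagged_division_of_def by blast
    have D1div: "D1 division_of \<Union>D1"
      unfolding D1_def by (rule partial_division_of_tagged_division[OF tagged_partial_division_subset[OF pp p1p]])
    have D1sub: "\<Union>D1 \<subseteq> {a..b}" unfolding D1_def using p1p tagged_division_ofD(3)[OF p(1)] by fastforce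
    have D1U: "\<Union>D1 \<subseteq> U"
    proof
      fix y assume "y \<in> \<Union>D1"
      then obtain t K where tK: "(t, K) \<in> p1" "y \<in> K" unfolding D1_def by force
      then have "t \<in> N" "(t, K) \<in> p" unfolding p1_def P1_def by auto
      then show "y \<in> U" using R(2)[of t] p(2) tK(2) unfolding fine_def by blast
    qed
    have degen: "Sup K = Inf K" if H: "z1 \<in> p1" "z2 \<in> p1" "z1 \<noteq> z2" "snd z1 = K" "snd z2 = K" for z1 z2 K
    proof -
      obtain t1 where z1: "z1 = (t1, K)" using H(4) by (cases z1) auto
      obtain t2 where z2: "z2 = (t2, K)" using H(5) by (cases z2) auto
      have in1: "(t1, K) \<in> p" "(t2, K) \<in> p" using H(1,2) z1 z2 p1p by auto
      have "interior K \<inter> interior K = {}"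
        using tagged_division_ofD(5)[OF p(1) in1] H(3) z1 z2 by auto
      moreover obtain u v where uv: "K = {u..v}" "u \<le> v" "Inf K = u" "Sup K = v"
        using tag_elem[OF p(1) in1(1)] by blast
      ultimately have "\<not> u < v" by auto
      then show ?thesis using uv by auto
    qed
    have r1a: "(\<Sum>K\<in>snd ` p1. f (Sup K) - f (Inf K)) = (\<Sum>z\<in>p1. f (Sup (snd z)) - f (Inf (snd z)))"
    proof (rule sum.reindex_nontrivial[OF finp1, unfolded o_def])
      fix z1 z2 assume H: "z1 \<in> p1" "z2 \<in> p1" "z1 \<noteq> z2" "snd z1 = snd z2"
      have "Sup (snd z1) = Inf (snd z1)" using degen[OF H(1) H(2) H(3) refl H(4)[symmetric]] .
      then show "f (Sup (snd z1)) - f (Inf (snd z1)) = 0" by simp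
    qed
    have r1b: "sum G p1 = (\<Sum>z\<in>p1. f (Sup (snd z)) - f (Inf (snd z)))"
      unfolding G_def by (rule sum.cong[OF refl]) (simp add: case_prod_beta)
    have r1: "sum G p1 = (\<Sum>K\<in>D1. f (Sup K) - f (Inf K))"
      unfolding D1_def using r1a r1b by simp
    have r2: "(\<Sum>K\<in>D1. Sup K - Inf K) = (\<Sum>K\<in>D1. measure lebesgue K)"
    proof (rule sum.cong[OF refl])
      fix K assume "K \<in> D1"
      then obtain u v where "K = {u..v}" "u \<le> v" "Inf K = u" "Sup K = v"
        using div_elem[OF D1div] by blast
      then show "Sup K - Inf K = measure lebesgue K" by simp
    qed
    also have "\<dots> = measure lebesgue (\<Union>D1)" using content_division[OF D1div] .
    also have "\<dots> \<le> measure lebesgue U"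
      using D1U lmeasurable_division[OF D1div] Um by (intro measure_mono_fmeasurable) auto
    finally have "(\<Sum>K\<in>D1. Sup K - Inf K) < \<delta>" using Umeas by linarith
    then have "(\<Sum>K\<in>D1. norm (f (Sup K) - f (Inf K))) < \<epsilon>" using dh[OF D1div D1sub] by blast
    moreover have "(\<Sum>K\<in>D1. f (Sup K) - f (Inf K)) \<le> (\<Sum>K\<in>D1. norm (f (Sup K) - f (Inf K)))"
      by (intro sum_mono) auto
    ultimately show ?thesis using r1 unfolding p1_def by linarith
  qed
  show ?thesis using sumall split good bad by linarith
qed

lemma ae_mono:
  fixes f :: "real \<Rightarrow> real"
  assumes ab: "a \<le> b" and N: "negligible N"
    and der: "\<And>t. t \<in> {a..b} - N \<Longrightarrow> \<exists>D. (f has_real_derivative D) (at t within {a..b}) \<and> D \<le> 0"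
    and ac: "acd f a b"
  shows "f b \<le> f a"
proof (rule ccontr)
  assume "\<not> f b \<le> f a"
  then have pos: "f b - f a > 0" by simp
  define c where "c = b - a + 1"
  have c: "c > 0" unfolding c_def using ab by simp
  define \<epsilon> where "\<epsilon> = (f b - f a) / (2 * c)"
  have e: "\<epsilon> > 0" unfolding \<epsilon>_def using pos c by simp
  have "f b - f a \<le> \<epsilon> * (b - a) + \<epsilon>" using ae_mono_key[OF ab N der ac e] by blast
  also have "\<dots> = \<epsilon> * c" unfolding c_def by (simp add: algebra_simps)
  also have "\<dots> = (f b - f a) / 2" unfolding \<epsilon>_def using c by simp
  finally show False using pos by simp
qed



lemma sq_lip:
  fixes a b :: "'a::real_normed_vector"
  assumes "norm a \<le> M" "norm b \<le> M"
  shows "\<bar>(1/2) * (norm a)\<^sup>2 - (1/2) * (norm b)\<^sup>2\<bar> \<le> M * norm (a - b)"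
proof -
  have e1: "(1/2) * (norm a)\<^sup>2 - (1/2) * (norm b)\<^sup>2 = (1/2) * ((norm a - norm b) * (norm a + norm b))"
    by (simp add: power2_eq_square algebra_simps)
  have "\<bar>(1/2) * (norm a)\<^sup>2 - (1/2) * (norm b)\<^sup>2\<bar> = (1/2) * (\<bar>norm a - norm b\<bar> * (norm a + norm b))"
    unfolding e1 by (simp add: abs_mult)
  also have "\<dots> \<le> (1/2) * (norm (a - b) * (2 * M))"
    using assms by (intro mult_left_mono mult_mono norm_triangle_ineq3) auto
  also have "\<dots> = M * norm (a - b)" by simp
  finally show ?thesis .
qed

theorem proposition4p1:
  fixes m :: nat
    and f :: "nat \<Rightarrow> 'a::{real_inner, complete_space} \<Rightarrow> real"
    and g :: "nat \<Rightarrow> 'a \<Rightarrow> 'a"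
    and \<alpha> t0 :: real
    and x0 v0 :: 'a
    and x xd xdd :: "real \<Rightarrow> 'a"
  assumes m_pos: "m \<ge> 1"
    and f_convex: "\<And>i. i \<in> {1..m} \<Longrightarrow> convex_on UNIV (f i)"
    and f_grad: "\<And>i z. i \<in> {1..m} \<Longrightarrow> (f i has_derivative (\<lambda>h. g i z \<bullet> h)) (at z)"
    and g_cont: "\<And>i. i \<in> {1..m} \<Longrightarrow> continuous_on UNIV (g i)"
    and \<alpha>_pos: "\<alpha> > 0"
    and t0_pos: "t0 > 0"
    \<comment> \<open>x is C^1 on [t0,+inf) with derivative xd\<close>
    and x_deriv: "\<And>t. t \<ge> t0 \<Longrightarrow> (x has_vector_derivative xd t) (at t within {t0..})"
    and xd_cont: "continuous_on {t0..} xd"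
    \<comment> \<open>xd absolutely continuous on every [t0,T]\<close>
    and xd_ac: "\<And>T. T \<ge> t0 \<Longrightarrow> abs_cont_on {t0..T} xd"
    \<comment> \<open>xdd measurable, xd(t) = xd(t0) + integral of xdd over [t0,t]\<close>
    and xdd_meas: "xdd \<in> borel_measurable (lebesgue_on {t0..})"
    and xd_integral: "\<And>t. t \<ge> t0 \<Longrightarrow> (xdd has_integral (xd t - xd t0)) {t0..t}"
    and xdd_deriv: "AE t in lborel. t > t0 \<longrightarrow> (xd has_vector_derivative xdd t) (at t)"
    \<comment> \<open>the differential inclusion, a.e.\<close>
    and ode: "AE t in lborel. t > t0 \<longrightarrow>
               (\<alpha> / t) *\<^sub>R xd t + proj ((\<lambda>c. c + xdd t) ` Cset m g (x t)) 0 = 0"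
    and init: "x t0 = x0" "xd t0 = v0"
  shows "\<forall>i\<in>{1..m}.
           let W = (\<lambda>t. f i (x t) + (1/2) * (norm (xd t))\<^sup>2) in
             (AE t in lborel. t \<ge> t0 \<longrightarrow>
                (\<exists>D. (W has_real_derivative D) (at t) \<and> D \<le> - (\<alpha> / t) * (norm (xd t))\<^sup>2))
           \<and> (\<forall>s t. t0 \<le> s \<longrightarrow> s \<le> t \<longrightarrow> W t \<le> W s)
           \<and> (\<exists>L::ereal. L \<noteq> \<infinity> \<and> ((\<lambda>t. ereal (W t)) \<longlongrightarrow> L) at_top)
           \<and> (bdd_below (range (f i)) \<longrightarrow> (\<exists>L::real. (W \<longlongrightarrow> L) at_top))"
proof -
  have main: "let W = (\<lambda>t. f i (x t) + (1/2) * (norm (xd t))\<^sup>2) in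
             (AE t in lborel. t \<ge> t0 \<longrightarrow>
                (\<exists>D. (W has_real_derivative D) (at t) \<and> D \<le> - (\<alpha> / t) * (norm (xd t))\<^sup>2))
           \<and> (\<forall>s t. t0 \<le> s \<longrightarrow> s \<le> t \<longrightarrow> W t \<le> W s)
           \<and> (\<exists>L::ereal. L \<noteq> \<infinity> \<and> ((\<lambda>t. ereal (W t)) \<longlongrightarrow> L) at_top)
           \<and> (bdd_below (range (f i)) \<longrightarrow> (\<exists>L::real. (W \<longlongrightarrow> L) at_top))"
    if i: "i \<in> {1..m}" for i
  proof -
    define W where "W = (\<lambda>t. f i (x t) + (1/2) * (norm (xd t))\<^sup>2)"
    have xcont: "continuous_on {t0..} x"
      using x_deriv by (intro continuous_on_vector_derivative) auto
    have pw: "\<exists>D. (W has_real_derivative D) (at t) \<and> D \<le> - (\<alpha> / t) * (norm (xd t))\<^sup>2"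
      if t: "t > t0" and dd: "(xd has_vector_derivative xdd t) (at t)"
        and od: "(\<alpha> / t) *\<^sub>R xd t + proj ((\<lambda>c. c + xdd t) ` Cset m g (x t)) 0 = 0" for t
    proof -
      have "at t within {t0..} = at t"
        using t by (intro at_within_interior) (simp add: interior_Ici[of "t0 - 1"])
      then have dx: "(x has_vector_derivative xd t) (at t)" using x_deriv[of t] t by simp
      have tp: "0 < t" using t t0_pos by simp
      show ?thesis unfolding W_def
        using pointwise[where i=i and m=m and f=f and g=g and x=x and xd=xd and xdd=xdd and t=t and \<alpha>=\<alpha>, OF i f_grad[OF i] dx dd \<alpha>_pos tp od] by simp
    qed
    have AE1: "AE t in lborel. t \<ge> t0 \<longrightarrow>
                (\<exists>D. (W has_real_derivative D) (at t) \<and> D \<le> - (\<alpha> / t) * (norm (xd t))\<^sup>2)"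
      using xdd_deriv ode AE_lborel_singleton[of t0]
    proof eventually_elim
      case (elim t)
      then show ?case using pw[of t] by force
    qed
    have mono: "W t \<le> W s" if st: "t0 \<le> s" "s \<le> t" for s t
    proof -
      obtain N where N: "{r \<in> space lborel. \<not> (r \<ge> t0 \<longrightarrow>
                (\<exists>D. (W has_real_derivative D) (at r) \<and> D \<le> - (\<alpha> / r) * (norm (xd r))\<^sup>2))} \<subseteq> N"
          "emeasure lborel N = 0" "N \<in> sets lborel"
        using AE_E[OF AE1] by blast
      have negN: "negligible N"
        using N(2,3) by (simp add: negligible_iff_null_sets null_sets_completionI null_setsI)
      have der: "\<exists>D. (W has_real_derivative D) (at r within {s..t}) \<and> D \<le> 0" if r: "r \<in> {s..t} - N" for r
      proof -
        have "r \<ge> t0" using r st by auto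
        then obtain D where D: "(W has_real_derivative D) (at r)" "D \<le> - (\<alpha> / r) * (norm (xd r))\<^sup>2"
          using N(1) r by auto
        have "r > 0" using \<open>r \<ge> t0\<close> t0_pos by simp
        then have "(\<alpha> / r) * (norm (xd r))\<^sup>2 \<ge> 0" using \<alpha>_pos by simp
        then have "D \<le> 0" using D(2) by simp
        then show ?thesis using D(1) has_field_derivative_at_within by blast
      qed
      have sub: "{s..t} \<subseteq> {t0..}" using st by auto
      have cc: "continuous_on {s..t} (\<lambda>r. g i (x r) \<bullet> xd r)"
      proof (intro continuous_intros)
        show "continuous_on {s..t} (\<lambda>r. g i (x r))"
          using continuous_on_compose2[OF g_cont[OF i] continuous_on_subset[OF xcont sub]] by auto
        show "continuous_on {s..t} xd" using continuous_on_subset[OF xd_cont sub] .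
      qed
      obtain B where B0: "\<forall>y\<in>(\<lambda>r. g i (x r) \<bullet> xd r) ` {s..t}. norm y \<le> B"
        using compact_imp_bounded[OF compact_continuous_image[OF cc compact_Icc]]
        unfolding bounded_iff by blast
      have B: "\<And>r. r \<in> {s..t} \<Longrightarrow> \<bar>g i (x r) \<bullet> xd r\<bar> \<le> B" using B0 by auto
      obtain M where M0: "\<forall>y\<in>xd ` {s..t}. norm y \<le> M"
        using compact_imp_bounded[OF compact_continuous_image[OF continuous_on_subset[OF xd_cont sub] compact_Icc]]
        unfolding bounded_iff by blast
      have M: "\<And>r. r \<in> {s..t} \<Longrightarrow> norm (xd r) \<le> M" using M0 by auto
      have acF: "acd (\<lambda>r. f i (x r)) s t"
      proof (rule acd_lip)
        fix u v assume uv: "s \<le> u" "u \<le> v" "v \<le> t"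
        show "norm (f i (x v) - f i (x u)) \<le> B * (v - u)"
        proof (cases "u < v")
          case False
          then have "u = v" using uv by simp
          then show ?thesis by simp
        next
          case True
          have dF: "((\<lambda>r. f i (x r)) has_derivative (\<lambda>h. h * (g i (x r) \<bullet> xd r))) (at r within {u..v})"
            if r: "u \<le> r" "r \<le> v" for r
          proof -
            have "(x has_vector_derivative xd r) (at r within {u..v})"
              using has_vector_derivative_within_subset[OF x_deriv[of r]] r uv st by auto
            then have "((f i \<circ> x) has_derivative ((\<lambda>h. g i (x r) \<bullet> h) \<circ> (\<lambda>h. h *\<^sub>R xd r))) (at r within {u..v})"
              unfolding has_vector_derivative_def
              by (rule diff_chain_within) (auto intro: has_derivative_at_withinI[OF f_grad[OF i]])
            then show ?thesis by (simp add: o_def mult.commute)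
          qed
          obtain \<xi> where \<xi>: "\<xi> \<in> {u<..<v}" "f i (x v) - f i (x u) = (v - u) * (g i (x \<xi>) \<bullet> xd \<xi>)"
            using mvt_simple[OF True, of "\<lambda>r. f i (x r)" "\<lambda>r h. h * (g i (x r) \<bullet> xd r)"] dF by auto
          have "\<bar>g i (x \<xi>) \<bullet> xd \<xi>\<bar> \<le> B" using B \<xi>(1) uv by auto
          then have "\<bar>(v - u) * (g i (x \<xi>) \<bullet> xd \<xi>)\<bar> \<le> (v - u) * B"
            using True by (simp add: abs_mult mult_left_mono)
          then show ?thesis using \<xi>(2) by (simp add: mult.commute)
        qed
      qed
      have acX: "acd xd s t" using ac_to_acd[OF xd_ac[of t]] st by auto
      have acQ: "acd (\<lambda>r. (1/2) * (norm (xd r))\<^sup>2) s t"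
      proof (rule acd_comp[OF acX])
        fix u v assume uv: "s \<le> u" "u \<le> v" "v \<le> t"
        show "\<bar>(1/2) * (norm (xd v))\<^sup>2 - (1/2) * (norm (xd u))\<^sup>2\<bar> \<le> M * norm (xd v - xd u)"
          using sq_lip[OF M[of v] M[of u]] uv by auto
      qed
      have acW: "acd W s t" unfolding W_def using acd_add[OF acF acQ] by simp
      show ?thesis using ae_mono[OF st(2) negN der acW] by simp
    qed
    define L where "L = (INF r\<in>{t0..}. ereal (W r))"
    have lim: "((\<lambda>r. ereal (W r)) \<longlongrightarrow> L) at_top"
    proof (rule order_tendstoI)
      fix y assume "y < L"
      then have "\<forall>r\<ge>t0. y < ereal (W r)"
        unfolding L_def by (meson INF_lower atLeast_iff less_le_trans)
      then show "\<forall>\<^sub>F r in at_top. y < ereal (W r)" unfolding eventually_at_top_linorder by blast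
    next
      fix y assume "L < y"
      then obtain r0 where r0: "r0 \<ge> t0" "ereal (W r0) < y" unfolding L_def INF_less_iff by auto
      have "\<forall>r\<ge>r0. ereal (W r) < y"
      proof (intro allI impI)
        fix r assume "r \<ge> r0"
        then have "W r \<le> W r0" using mono r0 by blast
        then show "ereal (W r) < y" using r0(2) by (meson ereal_less_eq(3) order_le_less_trans)
      qed
      then show "\<forall>\<^sub>F r in at_top. ereal (W r) < y" unfolding eventually_at_top_linorder by blast
    qed
    have Lfin: "L \<noteq> \<infinity>"
    proof -
      have "L \<le> ereal (W t0)" unfolding L_def by (rule INF_lower) simp
      then show ?thesis by auto
    qed
    have bdd: "\<exists>l::real. (W \<longlongrightarrow> l) at_top" if bb: "bdd_below (range (f i))"
    proof -
      obtain c where c: "\<And>z. c \<le> f i z" using bb unfolding bdd_below_def by auto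
      have "ereal c \<le> L" unfolding L_def
      proof (rule INF_greatest)
        fix r assume "r \<in> {t0..}"
        have "0 \<le> (norm (xd r))\<^sup>2" by simp
        then have "c \<le> W r" unfolding W_def using c[of "x r"] by linarith
        then show "ereal c \<le> ereal (W r)" by simp
      qed
      then have "L \<noteq> - \<infinity>" by (cases L) auto
      then obtain l where "L = ereal l" using Lfin by (cases L) auto
      then have "((\<lambda>r. ereal (W r)) \<longlongrightarrow> ereal l) at_top" using lim by simp
      then have "(W \<longlongrightarrow> l) at_top" by (simp only: lim_ereal)
      then show ?thesis by blast
    qed
    have final: "(AE t in lborel. t \<ge> t0 \<longrightarrow>
                (\<exists>D. (W has_real_derivative D) (at t) \<and> D \<le> - (\<alpha> / t) * (norm (xd t))\<^sup>2))
           \<and> (\<forall>s t. t0 \<le> s \<longrightarrow> s \<le> t \<longrightarrow> W t \<le> W s)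
           \<and> (\<exists>L::ereal. L \<noteq> \<infinity> \<and> ((\<lambda>t. ereal (W t)) \<longlongrightarrow> L) at_top)
           \<and> (bdd_below (range (f i)) \<longrightarrow> (\<exists>L::real. (W \<longlongrightarrow> L) at_top))"
    proof (intro conjI)
      show "AE t in lborel. t \<ge> t0 \<longrightarrow>
                (\<exists>D. (W has_real_derivative D) (at t) \<and> D \<le> - (\<alpha> / t) * (norm (xd t))\<^sup>2)" by (rule AE1)
      show "\<forall>s t. t0 \<le> s \<longrightarrow> s \<le> t \<longrightarrow> W t \<le> W s" using mono by blast
      show "\<exists>L::ereal. L \<noteq> \<infinity> \<and> ((\<lambda>t. ereal (W t)) \<longlongrightarrow> L) at_top"
        using lim Lfin by blast
      show "bdd_below (range (f i)) \<longrightarrow> (\<exists>L::real. (W \<longlongrightarrow> L) at_top)"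
        using bdd by blast
    qed
    show ?thesis unfolding Let_def using final unfolding W_def .
  qed
  show ?thesis
  proof (intro ballI)
    fix i assume "i \<in> {1..m}"
    then show "let W = (\<lambda>t. f i (x t) + (1/2) * (norm (xd t))\<^sup>2) in
             (AE t in lborel. t \<ge> t0 \<longrightarrow>
                (\<exists>D. (W has_real_derivative D) (at t) \<and> D \<le> - (\<alpha> / t) * (norm (xd t))\<^sup>2))
           \<and> (\<forall>s t. t0 \<le> s \<longrightarrow> s \<le> t \<longrightarrow> W t \<le> W s)
           \<and> (\<exists>L::ereal. L \<noteq> \<infinity> \<and> ((\<lambda>t. ereal (W t)) \<longlongrightarrow> L) at_top)
           \<and> (bdd_below (range (f i)) \<longrightarrow> (\<exists>L::real. (W \<longlongrightarrow> L) at_top))"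
      by (rule main)
  qed
qed

end
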